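(* For all integers $0\le t\le n$ with $n\ge1$, the exact-$t$ function $f^{=}_{t,n}:\{0,1\}^n\to\{0,1\}$, defined by $f^{=}_{t,n}(x)=1$ if $\sum_{i=1}^n x_i=t$ and $f^{=}_{t,n}(x)=0$ otherwise, has a quadratization using $\lfloor n/2\rfloor$ auxiliary variables.
   Context: A quadratization of $f:\{0,1\}^n\to\mathbb{R}$ using $m$ auxiliary variables is a polynomial $g(x,y)$ of degree at most $2$ in $x_1,\ldots,x_n,y_1,\ldots,y_m$ such that $f(x)=\min\{g(x,y):y\in\{0,1\}^m\}$ for all $x\in\{0,1\}^n$. *)

theory Defs
  imports Complex_Main
begin

text \<open>Points of {0,1}^n are represented as functions nat => real whose values
at indices i < n lie in {0,1}; values at indices >= n are irrelevant.\<close>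

definition binary_vec :: "nat \<Rightarrow> (nat \<Rightarrow> real) \<Rightarrow> bool" where
  "binary_vec n x \<longleftrightarrow> (\<forall>i<n. x i \<in> {0, 1})"

definition deg2_poly :: "nat \<Rightarrow> ((nat \<Rightarrow> real) \<Rightarrow> real) \<Rightarrow> bool" where
  "deg2_poly N g \<longleftrightarrow> (\<exists>(c::real) (a::nat \<Rightarrow> real) (b::nat \<Rightarrow> nat \<Rightarrow> real).
      \<forall>z. g z = c + (\<Sum>i<N. a i * z i) + (\<Sum>i<N. \<Sum>j<N. b i j * z i * z j))"

text \<open>Joint assignment: variables x_1..x_n are z_0..z_(n-1), auxiliary
variables y_1..y_m are z_n..z_(n+m-1).\<close>

definition join_vars :: "nat \<Rightarrow> (nat \<Rightarrow> real) \<Rightarrow> (nat \<Rightarrow> real) \<Rightarrow> nat \<Rightarrow> real" where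
  "join_vars n x y = (\<lambda>i. if i < n then x i else y (i - n))"

definition quadratization ::
  "nat \<Rightarrow> nat \<Rightarrow> ((nat \<Rightarrow> real) \<Rightarrow> real) \<Rightarrow> ((nat \<Rightarrow> real) \<Rightarrow> real) \<Rightarrow> bool" where
  "quadratization n m f g \<longleftrightarrow> deg2_poly (n + m) g \<and>
     (\<forall>x. binary_vec n x \<longrightarrow>
        (\<exists>y. binary_vec m y \<and> g (join_vars n x y) = f x) \<and>
        (\<forall>y. binary_vec m y \<longrightarrow> f x \<le> g (join_vars n x y)))"

definition exact_fn :: "nat \<Rightarrow> nat \<Rightarrow> (nat \<Rightarrow> real) \<Rightarrow> real" where
  "exact_fn t n x = (if (\<Sum>i<n. x i) = real t then 1 else 0)"

end

theory Submission
  imports Defs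
begin

definition Gi :: "int \<Rightarrow> int \<Rightarrow> int \<Rightarrow> int \<Rightarrow> int" where
 "Gi u Y Z W = (u-1)*(u-2) + 2*Y*(2*Y-2*u+3) + 2*Z*(2*Z+2*u+3) + 6*u*W"

lemma cons_nonneg: "(k-1)*(k-2) \<ge> (0::int)"
proof (cases "k \<le> 1")
  case True then show ?thesis by (simp add: mult_nonpos_nonpos)
next
  case False then show ?thesis by simp
qed

lemma lbA: fixes u Y :: int assumes "Y \<ge> 0"
  shows "2*Y*(2*Y-2*u+3) \<ge> (if u \<ge> 1 then -(u-1)*(u-2) else 0)"
proof (cases "u \<ge> 1")
  case True
  have "(u-2*Y-1)*(u-2*Y-2) \<ge> 0" using cons_nonneg[of "u-2*Y"] by simp
  moreover have "(u-2*Y-1)*(u-2*Y-2) = 2*Y*(2*Y-2*u+3) + (u-1)*(u-2)" by (simp add: algebra_simps)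
  moreover have "(1-u)*(u-2) = -((u-1)*(u-2))" by (simp add: algebra_simps)
  ultimately show ?thesis using True by simp
next
  case False then show ?thesis using assms by simp
qed

lemma lbB: fixes u Z :: int assumes "Z \<ge> 0"
  shows "2*Z*(2*Z+2*u+3) \<ge> (if u \<le> -1 then -(u+1)*(u+2) else 0)"
  using lbA[of Z "-u", OF assms] by (auto simp: algebra_simps split: if_splits)

lemma lbW: fixes u W :: int assumes "W = 0 \<or> W = 1"
  shows "6*u*W \<ge> min 0 (6*u)" using assms by auto

lemma core_lb: assumes "Y \<ge> 0" "Z \<ge> 0" "W = 0 \<or> W = 1"
  shows "Gi u Y Z W \<ge> (if u = 0 then 2 else 0)"
proof -
  have a: "2*Y*(2*Y-2*u+3) \<ge> (if u \<ge> 1 then -(u-1)*(u-2) else 0)" using lbA assms by blast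
  have b: "2*Z*(2*Z+2*u+3) \<ge> (if u \<le> -1 then -(u+1)*(u+2) else 0)" using lbB assms by blast
  have c: "6*u*W \<ge> min 0 (6*u)" using lbW assms by blast
  consider "u = 0" | "u \<ge> 1" | "u \<le> -1" by linarith
  then show ?thesis
  proof cases
    case 1
    have "2*Y*(2*Y-2*u+3) \<ge> 0" "2*Z*(2*Z+2*u+3) \<ge> 0" "6*u*W \<ge> 0" using a b c 1 by auto
    then show ?thesis using 1 unfolding Gi_def by simp
  next
    case 2
    have "2*Y*(2*Y-2*u+3) \<ge> -(u-1)*(u-2)" "2*Z*(2*Z+2*u+3) \<ge> 0" "6*u*W \<ge> 0" using a b c 2 by auto
    moreover have "-(u-1)*(u-2) = -((u-1)*(u-2))" by (simp add: algebra_simps)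
    moreover have "(if u = 0 then 2 else 0) = (0::int)" using 2 by simp
    ultimately show ?thesis unfolding Gi_def by linarith
  next
    case 3
    have "2*Y*(2*Y-2*u+3) \<ge> 0" "2*Z*(2*Z+2*u+3) \<ge> -(u+1)*(u+2)" "6*u*W \<ge> 6*u" using a b c 3 by auto
    moreover have "(u-1)*(u-2) - (u+1)*(u+2) + 6*u = 0" by (simp add: algebra_simps)
    moreover have "-(u+1)*(u+2) = -((u+1)*(u+2))" by (simp add: algebra_simps)
    moreover have "(if u = 0 then 2 else 0) = (0::int)" using 3 by simp
    ultimately show ?thesis unfolding Gi_def by linarith
  qed
qed

lemma core_ach:
  fixes u :: int
  defines "Y0 \<equiv> (if u \<ge> 2 then (u-1) div 2 else 0)"
    and "Z0 \<equiv> (if u \<le> -2 then (-u-1) div 2 else 0)"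
  assumes "u < 0 \<Longrightarrow> W = 1" "u > 0 \<Longrightarrow> W = 0"
  shows "Gi u Y0 Z0 W = (if u = 0 then 2 else 0)"
proof -
  consider "u = 0" | "u = 1" | "u \<ge> 2" | "u = -1" | "u \<le> -2" by linarith
  then show ?thesis
  proof cases
    case 3
    define q r where "q = (u-1) div 2" and "r = (u-1) mod 2"
    have u: "u = 2*q + r + 1" and r: "r = 0 \<or> r = 1" unfolding q_def r_def by auto
    have "Gi u Y0 Z0 W = r*r - r" using 3 assms(3-) unfolding Gi_def Y0_def Z0_def q_def[symmetric]
      by (simp add: u algebra_simps)
    then show ?thesis using r 3 by auto
  next
    case 5
    define q r where "q = (-u-1) div 2" and "r = (-u-1) mod 2"
    have u: "u = -(2*q + r + 1)" and r: "r = 0 \<or> r = 1" unfolding q_def r_def by auto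
    have "Gi u Y0 Z0 W = r*r - r" using 5 assms(3-) unfolding Gi_def Y0_def Z0_def q_def[symmetric]
      by (simp add: u algebra_simps)
    then show ?thesis using r 5 by auto
  qed (use assms in \<open>auto simp: Gi_def Y0_def Z0_def\<close>)
qed

definition aff :: "nat \<Rightarrow> ((nat \<Rightarrow> real) \<Rightarrow> real) \<Rightarrow> bool" where
  "aff N f \<longleftrightarrow> (\<exists>c a. \<forall>z. f z = c + (\<Sum>i<N. a i * z i))"

lemma aff_const: "aff N (\<lambda>z. c)"
  unfolding aff_def by (rule exI[of _ c], rule exI[of _ "\<lambda>i. 0"]) simp

lemma aff_lin: "aff N (\<lambda>z. \<Sum>i<N. a i * z i)"
  unfolding aff_def by (rule exI[of _ 0], rule exI[of _ a]) simp

lemma aff_add: "aff N f \<Longrightarrow> aff N g \<Longrightarrow> aff N (\<lambda>z. f z + g z)"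
  unfolding aff_def
proof (elim exE)
  fix c a d b assume f: "\<forall>z. f z = c + (\<Sum>i<N. a i * z i)" and g: "\<forall>z. g z = d + (\<Sum>i<N. b i * z i)"
  show "\<exists>c a. \<forall>z. f z + g z = c + (\<Sum>i<N. a i * z i)"
    by (rule exI[of _ "c+d"], rule exI[of _ "\<lambda>i. a i + b i"]) (simp add: f g sum.distrib algebra_simps)
qed

lemma aff_scale: "aff N f \<Longrightarrow> aff N (\<lambda>z. k * f z)"
  unfolding aff_def
proof (elim exE)
  fix c a assume f: "\<forall>z. f z = c + (\<Sum>i<N. a i * z i)"
  show "\<exists>c a. \<forall>z. k * f z = c + (\<Sum>i<N. a i * z i)"
    by (rule exI[of _ "k*c"], rule exI[of _ "\<lambda>i. k * a i"]) (simp add: f sum_distrib_left algebra_simps)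
qed

lemma aff_diff: "aff N f \<Longrightarrow> aff N g \<Longrightarrow> aff N (\<lambda>z. f z - g z)"
  using aff_add[of N f "\<lambda>z. (-1) * g z"] aff_scale[of N g "-1"] by simp

lemma deg2_mult: assumes "aff N f" "aff N g" shows "deg2_poly N (\<lambda>z. f z * g z)"
proof -
  obtain c a where f: "\<forall>z. f z = c + (\<Sum>i<N. a i * z i)" using assms(1) unfolding aff_def by blast
  obtain d b where g: "\<forall>z. g z = d + (\<Sum>i<N. b i * z i)" using assms(2) unfolding aff_def by blast
  show ?thesis unfolding deg2_poly_def
  proof (intro exI allI)
    fix z :: "nat \<Rightarrow> real"
    have "(\<Sum>i<N. a i * z i) * (\<Sum>j<N. b j * z j) = (\<Sum>i<N. \<Sum>j<N. (a i * b j) * z i * z j)"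
      by (simp add: sum_product algebra_simps)
    then show "f z * g z = c*d + (\<Sum>i<N. (c * b i + d * a i) * z i) + (\<Sum>i<N. \<Sum>j<N. (a i * b j) * z i * z j)"
      by (simp add: f g algebra_simps sum.distrib sum_distrib_left)
  qed
qed

lemma deg2_add: assumes "deg2_poly N f" "deg2_poly N g" shows "deg2_poly N (\<lambda>z. f z + g z)"
proof -
  obtain c a b where f: "\<forall>z. f z = c + (\<Sum>i<N. a i * z i) + (\<Sum>i<N. \<Sum>j<N. b i j * z i * z j)"
    using assms(1) unfolding deg2_poly_def by blast
  obtain c' a' b' where g: "\<forall>z. g z = c' + (\<Sum>i<N. a' i * z i) + (\<Sum>i<N. \<Sum>j<N. b' i j * z i * z j)"
    using assms(2) unfolding deg2_poly_def by blast
  show ?thesis unfolding deg2_poly_def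
    by (rule exI[of _ "c+c'"], rule exI[of _ "\<lambda>i. a i + a' i"], rule exI[of _ "\<lambda>i j. b i j + b' i j"])
       (simp add: f g sum.distrib algebra_simps)
qed

lemma deg2_scale: assumes "deg2_poly N f" shows "deg2_poly N (\<lambda>z. k * f z)"
proof -
  obtain c a b where f: "\<forall>z. f z = c + (\<Sum>i<N. a i * z i) + (\<Sum>i<N. \<Sum>j<N. b i j * z i * z j)"
    using assms(1) unfolding deg2_poly_def by blast
  show ?thesis unfolding deg2_poly_def
    by (rule exI[of _ "k*c"], rule exI[of _ "\<lambda>i. k * a i"], rule exI[of _ "\<lambda>i j. k * b i j"])
       (simp add: f sum_distrib_left algebra_simps)
qed

definition ind :: "nat \<Rightarrow> nat set \<Rightarrow> (nat \<Rightarrow> real) \<Rightarrow> real" where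
  "ind N I z = (\<Sum>i<N. (if i \<in> I then 1 else 0) * z i)"

lemma aff_ind: "aff N (ind N I)"
  unfolding ind_def using aff_lin[of N "\<lambda>i. if i \<in> I then 1 else 0"] by simp

lemma ind_eq: assumes "I \<subseteq> {..<N}" shows "ind N I z = (\<Sum>i\<in>I. z i)"
proof -
  have "ind N I z = (\<Sum>i\<in>{..<N}. if i \<in> I then z i else 0)" unfolding ind_def
    by (rule sum.cong) auto
  also have "\<dots> = (\<Sum>i\<in>{..<N} \<inter> I. z i)" by (simp add: sum.inter_restrict)
  also have "{..<N} \<inter> I = I" using assms by blast
  finally show ?thesis .
qed

lemma ind_x: assumes "n \<le> N" shows "ind N {..<n} (join_vars n x y) = (\<Sum>i<n. x i)"
  using assms by (simp add: ind_eq join_vars_def)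

lemma ind_y: assumes "n + a + c \<le> N"
  shows "ind N {n+a..<n+a+c} (join_vars n x y) = (\<Sum>j<c. y (a + j))"
proof -
  have "ind N {n+a..<n+a+c} (join_vars n x y) = (\<Sum>i\<in>{n+a..<n+a+c}. join_vars n x y i)"
    using assms by (intro ind_eq) auto
  also have "\<dots> = (\<Sum>j\<in>{..<c}. join_vars n x y (n + a + j))"
    by (rule sum.reindex_bij_witness[of _ "\<lambda>j. n + a + j" "\<lambda>i. i - (n + a)"]) auto
  also have "\<dots> = (\<Sum>j<c. y (a + j))" by (simp add: join_vars_def)
  finally show ?thesis .
qed

lemma sum_binary: "(\<forall>i<n. x i \<in> {0,1::real}) \<Longrightarrow> \<exists>k. (\<Sum>i<n. x i) = real k \<and> k \<le> n"
proof (induction n)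
  case 0 then show ?case by simp
next
  case (Suc n)
  then obtain k where k: "(\<Sum>i<n. x i) = real k" "k \<le> n" by auto
  have "x n = 0 \<or> x n = 1" using Suc.prems by auto
  then show ?case
  proof
    assume "x n = 0" then show ?case using k by (intro exI[of _ k]) auto
  next
    assume "x n = 1" then show ?case using k by (intro exI[of _ "Suc k"]) auto
  qed
qed

lemma sum_prefix: "(\<Sum>j<c. if j < a then 1 else 0) = real (min a c)"
  by (induction c) (auto simp: min_def)

definition Gr :: "real \<Rightarrow> real \<Rightarrow> real \<Rightarrow> real \<Rightarrow> real" where
  "Gr u Y Z W = (u-1)*(u-2) + 2*Y*(2*Y-2*u+3) + 2*Z*(2*Z+2*u+3) + 6*u*W"

lemma Gr_int: "Gr (of_int u) (of_int Y) (of_int Z) (of_int W) = of_int (Gi u Y Z W)"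
  by (simp add: Gr_def Gi_def)

theorem corollary4:
  fixes n t :: nat
  assumes "1 \<le> n" and "t \<le> n"
  shows "\<exists>g. quadratization n (n div 2) (exact_fn t n) g"
proof -
  define m where "m = n div 2"
  define N where "N = n + m"
  define M where "M = (n - t - 1) div 2"
  define M' where "M' = (t - 1) div 2"
  define b where "b = (0 < t \<and> t < n)"
  have bound: "n + M + M' + (if b then 1 else 0) \<le> N"
  proof (cases b)
    case True
    then have "0 < t" "t < n" unfolding b_def by auto
    then have "(n - t - 1) div 2 + (t - 1) div 2 + 1 \<le> n div 2" by presburger
    then show ?thesis using True unfolding N_def m_def M_def M'_def by simp
  next
    case False
    then have "t = 0 \<or> t = n" unfolding b_def using assms by auto
    then have "(n - t - 1) div 2 + (t - 1) div 2 \<le> n div 2" by auto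
    then show ?thesis using False unfolding N_def m_def M_def M'_def by simp
  qed
  define U where "U z = ind N {..<n} z - real t" for z
  define Yf where "Yf z = ind N {n+0..<n+0+M} z" for z
  define Zf where "Zf z = ind N {n+M..<n+M+M'} z" for z
  define Wf where "Wf z = (if b then ind N {n+(M+M')..<n+(M+M')+1} z else if t = n then 1 else 0)" for z
  define g where "g z = (1/2) * Gr (U z) (Yf z) (Zf z) (Wf z)" for z
  have aU: "aff N U" unfolding U_def by (intro aff_diff aff_ind aff_const)
  have aY: "aff N Yf" unfolding Yf_def by (rule aff_ind)
  have aZ: "aff N Zf" unfolding Zf_def by (rule aff_ind)
  have aW: "aff N Wf" unfolding Wf_def by (cases b; cases "t = n") (simp_all add: aff_ind aff_const)
  have deg: "deg2_poly N g"
  proof -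
    have "deg2_poly N (\<lambda>z. Gr (U z) (Yf z) (Zf z) (Wf z))"
      unfolding Gr_def
      by (intro deg2_add deg2_mult aff_diff aff_add aff_scale aff_const aU aY aZ aW)
    then show ?thesis unfolding g_def by (rule deg2_scale)
  qed
  have main: "(\<exists>y. binary_vec m y \<and> g (join_vars n x y) = exact_fn t n x) \<and>
        (\<forall>y. binary_vec m y \<longrightarrow> exact_fn t n x \<le> g (join_vars n x y))"
    if bx: "binary_vec n x" for x
  proof -
    obtain k where k: "(\<Sum>i<n. x i) = real k" "k \<le> n" using sum_binary bx unfolding binary_vec_def by blast
    define u where "u = int k - int t"
    have ex: "exact_fn t n x = (if u = 0 then 1 else 0)" unfolding exact_fn_def u_def k by simp
    have Uj: "U (join_vars n x y) = of_int u" for y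
      unfolding U_def u_def using ind_x[of n N x y] k N_def by simp
    have Yj: "Yf (join_vars n x y) = (\<Sum>j<M. y j)" for y
      unfolding Yf_def using ind_y[of n 0 M N x y] bound by simp
    have Zj: "Zf (join_vars n x y) = (\<Sum>j<M'. y (M + j))" for y
      unfolding Zf_def using ind_y[of n M M' N x y] bound by simp
    have Wj: "Wf (join_vars n x y) = (if b then y (M + M') else if t = n then 1 else 0)" for y
      unfolding Wf_def using ind_y[of n "M+M'" 1 N x y] bound by (auto split: if_splits)
    have lb: "exact_fn t n x \<le> g (join_vars n x y)" if hby: "binary_vec m y" for y
    proof -
      have Mm: "M \<le> m" "M + M' \<le> m" using bound unfolding N_def by auto
      have "\<forall>i<M. y i \<in> {0,1}" using hby Mm unfolding binary_vec_def by auto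
      then obtain kY where kY: "(\<Sum>j<M. y j) = real kY" using sum_binary[of M y] by blast
      have "\<forall>i<M'. y (M + i) \<in> {0,1}" using hby Mm unfolding binary_vec_def by auto
      then obtain kZ where kZ: "(\<Sum>j<M'. y (M + j)) = real kZ" using sum_binary[of M' "\<lambda>j. y (M + j)"] by blast
      obtain w :: int where w: "Wf (join_vars n x y) = of_int w" "w = 0 \<or> w = 1"
      proof (cases b)
        case True
        have "M + M' < m" using bound True N_def by simp
        then have "y (M+M') = 0 \<or> y (M+M') = 1" using hby unfolding binary_vec_def by auto
        then show ?thesis using that[of 0] that[of 1] Wj True by auto
      next
        case False then show ?thesis using that[of 0] that[of 1] Wj by (cases "t = n") auto
      qed
      have "g (join_vars n x y) = (1/2) * of_int (Gi u (int kY) (int kZ) w)"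
        unfolding g_def Uj Yj Zj w(1) kY kZ using Gr_int[of u "int kY" "int kZ" w] by simp
      moreover have "Gi u (int kY) (int kZ) w \<ge> (if u = 0 then 2 else 0)" using core_lb w(2) by simp
      ultimately show ?thesis unfolding ex by (cases "u = 0") auto
    qed
    define Y0 where "Y0 = (if u \<ge> 2 then (u-1) div 2 else 0)"
    define Z0 where "Z0 = (if u \<le> -2 then (-u-1) div 2 else 0)"
    define W0 :: int where "W0 = (if u < 0 then 1 else 0)"
    have Y0M: "nat Y0 \<le> M" unfolding Y0_def M_def u_def using k assms by auto
    have Z0M: "nat Z0 \<le> M'" unfolding Z0_def M'_def u_def using k assms by auto
    define y where "y j = (if j < nat Y0 then 1 else if M \<le> j \<and> j < M + nat Z0 then 1
        else if j = M + M' then of_int W0 else (0::real))" for j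
    have hy: "binary_vec m y" unfolding binary_vec_def y_def W0_def by auto
    have sY: "(\<Sum>j<M. y j) = of_int Y0"
    proof -
      have "(\<Sum>j<M. y j) = (\<Sum>j<M. if j < nat Y0 then 1 else 0)"
        by (rule sum.cong) (auto simp: y_def)
      also have "\<dots> = of_int Y0" using Y0M by (simp add: sum_prefix Y0_def)
      finally show ?thesis .
    qed
    have sZ: "(\<Sum>j<M'. y (M + j)) = of_int Z0"
    proof -
      have "(\<Sum>j<M'. y (M + j)) = (\<Sum>j<M'. if j < nat Z0 then 1 else 0)"
        by (rule sum.cong) (use Y0M Z0M in \<open>auto simp: y_def\<close>)
      also have "\<dots> = of_int Z0" using Z0M by (simp add: sum_prefix Z0_def)
      finally show ?thesis .
    qed
    obtain w :: int where w: "Wf (join_vars n x y) = of_int w" "u < 0 \<Longrightarrow> w = 1" "u > 0 \<Longrightarrow> w = 0"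
    proof (cases b)
      case True
      have "y (M + M') = of_int W0" using Y0M Z0M by (auto simp: y_def)
      then show ?thesis using that[of W0] Wj True by (auto simp: W0_def)
    next
      case False
      show ?thesis
      proof (cases "t = n")
        case True
        then have "\<not> u > 0" unfolding u_def using k by simp
        then show ?thesis using that[of 1] Wj False True by auto
      next
        case tn: False
        then have "t = 0" using False assms unfolding b_def by auto
        then have "\<not> u < 0" unfolding u_def by simp
        then show ?thesis using that[of 0] Wj False tn by auto
      qed
    qed
    have "g (join_vars n x y) = (1/2) * of_int (Gi u Y0 Z0 w)"
      unfolding g_def Uj Yj Zj w(1) sY sZ using Gr_int[of u Y0 Z0 w] by simp
    also have "Gi u Y0 Z0 w = (if u = 0 then 2 else 0)"
      unfolding Y0_def Z0_def by (rule core_ach) (use w in auto)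
    finally have "g (join_vars n x y) = exact_fn t n x" unfolding ex by (cases "u = 0") simp_all
    then show ?thesis using hy lb by blast
  qed
  show ?thesis unfolding quadratization_def m_def[symmetric] N_def[symmetric]
    using deg main by blast
qed

end
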